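(* For $|q|<1$ and generic $k$ ($k\neq1$, no vanishing denominators): \begin{gather*} \sum_{n\ge0}\frac{(1-kq^{2n})(k;q)_n}{(1-k)(q;q)_n}(-1)^nk^nq^{n(3n-1)/2}=(kq;q)_\infty,\\ \sum_{n\ge0}\frac{(1-kq^{4n})(-q,k;q^2)_n}{(1-k)(-kq,q^2;q^2)_n}(-1)^nk^nq^{2n^2-n}=\frac{(kq^2;q^2)_\infty}{(-kq;q^2)_\infty},\\ \sum_{n\ge0}\frac{(1-kq^{2n})(-1,k;q)_n}{(1-k)(-kq,q;q)_n}(-1)^nk^nq^{n^2}=\frac{(kq;q)_\infty}{(-kq;q)_\infty},\\ \sum_{n\ge0}\frac{(1-kq^{2n})(k^2;q^2)_n}{(1-k)(q^2;q^2)_n}(-1)^nq^{n^2}=(kq;q)_\infty(q;q^2)_\infty,\\ \sum_{n\ge0}\frac{(1-kq^{4n})(-q;q^2)_n(k^2;q^4)_n}{(1-k)(-kq;q^2)_n(q^4;q^4)_n}(-1)^nq^{n^2}=\frac{(kq^2;q^2)_\infty(q;q)_\infty}{(-kq;q^2)_\infty(q^4;q^4)_\infty},\\ \sum_{n\ge0}\frac{(1-kq^{4n})(k;q)_{2n}}{(1-k)(q;q)_{2n}}q^{2n^2-n}=\frac{(kq^2;q^2)_\infty}{(q;q^2)_\infty},\\ \sum_{n\ge0}\frac{(1-kq^{4n})(-q;q^2)_n(k;q)_{2n}}{(1-k)(-kq;q^2)_n(q;q)_{2n}}q^{n^2-n}=\frac{(kq^2,-1;q^2)_\infty}{(-kq,q;q^2)_\infty}.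 \end{gather*}
   Context: Notation: $(x;q)_n=\prod_{i=0}^{n-1}(1-xq^i)$, $(x;q)_\infty=\prod_{i\ge0}(1-xq^i)$, and $(x_1,\dots,x_j;q)_n=(x_1;q)_n\cdots(x_j;q)_n$ (also for $n=\infty$). *)

theory Defs
  imports "HOL-Analysis.Analysis"
begin

definition qpoch :: "complex \<Rightarrow> complex \<Rightarrow> nat \<Rightarrow> complex" where
  "qpoch x q n = (\<Prod>i<n. 1 - x * q ^ i)"

definition qpoch_inf :: "complex \<Rightarrow> complex \<Rightarrow> complex" where
  "qpoch_inf x q = lim (\<lambda>n. qpoch x q n)"

end

theory Submission
  imports Defs
begin


lemma qpoch_conv:
  fixes x q :: complex assumes hq: "norm q < 1"
  shows "(\<lambda>n. qpoch x q n) \<longlonglongrightarrow> qpoch_inf x q"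
    and "convergent_prod (\<lambda>i. 1 - x * q ^ i)"
    and "qpoch_inf x q = prodinf (\<lambda>i. 1 - x * q ^ i)"
proof -
  have "summable (\<lambda>i. norm ((1 - x * q ^ i) - 1))"
    using hq by (simp add: norm_mult norm_power summable_mult)
  hence "abs_convergent_prod (\<lambda>i. 1 - x * q ^ i)"
    by (rule summable_imp_abs_convergent_prod)
  thus cp: "convergent_prod (\<lambda>i. 1 - x * q ^ i)"
    by (rule abs_convergent_prod_imp_convergent_prod)
  have t: "(\<lambda>n. qpoch x q n) \<longlonglongrightarrow> prodinf (\<lambda>i. 1 - x * q ^ i)"
    unfolding qpoch_def using has_prod_imp_tendsto'[OF convergent_prod_has_prod[OF cp]] .
  thus e: "qpoch_inf x q = prodinf (\<lambda>i. 1 - x * q ^ i)"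
    unfolding qpoch_inf_def by (rule limI)
  show "(\<lambda>n. qpoch x q n) \<longlonglongrightarrow> qpoch_inf x q" using t e by simp
qed

lemma qpoch_inf_nz:
  fixes x q :: complex assumes hq: "norm q < 1" and nz: "\<And>i. 1 - x * q ^ i \<noteq> 0"
  shows "qpoch_inf x q \<noteq> 0"
  using qpoch_conv[OF hq, of x] prodinf_nonzero nz by metis

lemma qpoch_nz_iff: "(\<forall>n. qpoch x q n \<noteq> 0) \<longleftrightarrow> (\<forall>i. 1 - x * q ^ i \<noteq> 0)"
proof
  assume h: "\<forall>n. qpoch x q n \<noteq> 0"
  show "\<forall>i. 1 - x * q ^ i \<noteq> 0"
  proof
    fix i from h have "qpoch x q (Suc i) \<noteq> 0" by blast
    thus "1 - x * q ^ i \<noteq> 0" by (simp add: qpoch_def)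
  qed
qed (simp add: qpoch_def)

lemma qpoch_Suc: "qpoch x q (Suc n) = qpoch x q n * (1 - x * q ^ n)"
  by (simp add: qpoch_def)

lemma qpoch_0_base: "qpoch 0 q n = 1" by (simp add: qpoch_def)
lemma qpoch_inf_0: "qpoch_inf 0 q = 1" by (simp add: qpoch_inf_def qpoch_0_base)

lemma qpoch_qq_nz: fixes q :: complex assumes "norm q < 1" shows "qpoch q q n \<noteq> 0"
proof -
  have "1 - q * q ^ i \<noteq> 0" for i
  proof
    assume "1 - q * q ^ i = 0"
    hence "q ^ Suc i = 1" by simp
    hence "norm (q ^ Suc i) = 1" by simp
    moreover have "norm (q ^ Suc i) < 1" unfolding norm_power
      using assms by (subst power_less_one_iff) auto
    ultimately show False by simp
  qed
  thus ?thesis by (simp add: qpoch_def)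
qed


lemma key_alg2:
 fixes a U C q x A N G W yy uu ww :: complex
 assumes "yy*(1-x)=1" "uu*(1-U*q*x)=1" "ww*(1-a*C*q*x)=1"
 shows "(1-U*q)*(1-a*C*q)*((1-a*x^2)*A*N*G*W*yy) - (1-U*C*q)*((1-a*q*x^2)*(A*(1-a*x))*(x*N)*G*(1-U*q)*(1-a*C*q)*W*yy*uu*ww) = (1-U*q)*(1-a*C*q)*A*N*G*W - (1-U*q)*(1-a*C*q)*(A*(1-a*x))*(N*((U-a*x)*(C-x)))*(G*(-(q*x)))*W*yy*uu*ww"
  using assms by algebra

definition ee :: "complex \<Rightarrow> complex \<Rightarrow> nat \<Rightarrow> complex" where
 "ee q a n = (if n = 0 then 1 else (1 - a*(q^n*q^n)) * (\<Prod>i<n-1. 1 - a*q^(i+1)))"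
definition nm :: "complex \<Rightarrow> complex \<Rightarrow> complex \<Rightarrow> complex \<Rightarrow> nat \<Rightarrow> complex" where
 "nm q a U C n = (\<Prod>i<n. (U - a*q^i)*(C - q^i))"
definition dn :: "complex \<Rightarrow> complex \<Rightarrow> complex \<Rightarrow> complex \<Rightarrow> nat \<Rightarrow> complex" where
 "dn q a U C n = (\<Prod>i<n. (1 - U*q^(i+1))*(1 - a*C*q^(i+1)))"
definition gg :: "complex \<Rightarrow> nat \<Rightarrow> complex" where
 "gg q n = (\<Prod>i<n. - (q^(i+1)))"
definition tt :: "complex \<Rightarrow> complex \<Rightarrow> complex \<Rightarrow> complex \<Rightarrow> nat \<Rightarrow> complex" where
 "tt q a U C n = ee q a n * nm q a U C n * gg q n / (qpoch q q n * dn q a U C n)"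
definition DD :: "complex \<Rightarrow> complex \<Rightarrow> complex \<Rightarrow> complex \<Rightarrow> nat \<Rightarrow> complex" where
 "DD q a U C n = (if n = 0 then 0 else (1-U*q)*(1-a*C*q) * (\<Prod>i<n-1. 1 - a*q^(i+1)) * nm q a U C n * gg q n / (qpoch q q (n-1) * dn q a U C n))"

lemma dn_nz:
  assumes "\<forall>j. 1 - U*q^(j+1) \<noteq> 0" "\<forall>j. 1 - a*C*q^(j+1) \<noteq> 0"
  shows "dn q a U C n \<noteq> 0"
  using assms by (simp add: dn_def)

lemma step:
  fixes q a U C :: complex
  assumes hq: "norm q < 1" and hU: "\<forall>j. 1 - U*q^(j+1) \<noteq> 0" and hC: "\<forall>j. 1 - a*C*q^(j+1) \<noteq> 0"
  shows "(1-U*q)*(1-a*C*q)*tt q a U C n - (1-a*q)*(1-U*C*q)*tt q (a*q) (U*q) C n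
         = DD q a U C n - DD q a U C (Suc n)"
proof (cases n)
  case 0
  have "1 - U*q \<noteq> 0" "1 - a*C*q \<noteq> 0" using hU[rule_format, of 0] hC[rule_format, of 0] by auto
  then have "DD q a U C (Suc 0) = (U-a)*(C-1)*(-q)"
    by (simp add: DD_def nm_def gg_def dn_def qpoch_def)
  moreover have "tt q a U C 0 = 1" "tt q (a*q) (U*q) C 0 = 1" "DD q a U C 0 = 0"
    by (simp_all add: tt_def ee_def nm_def gg_def dn_def qpoch_def DD_def)
  ultimately show ?thesis using 0 by (simp add: algebra_simps)
next
  case (Suc m)
  define x where "x = q ^ Suc m"
  define A where "A = (\<Prod>i<m. 1 - a*q^(i+1))"
  define A2 where "A2 = (\<Prod>i<m. 1 - a*q*q^(i+1))"
  define N where "N = nm q a U C (Suc m)"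
  define G where "G = gg q (Suc m)"
  define d1 where "d1 = dn q a U C (Suc m)"
  define d' where "d' = dn q (a*q) (U*q) C (Suc m)"
  define Q where "Q = qpoch q q m"
  define W where "W = inverse (Q * d1)"
  define yy where "yy = inverse (1 - x)"
  define uu where "uu = inverse (1 - U*q*x)"
  define ww where "ww = inverse (1 - a*C*q*x)"
  have c0: "1 - U*q \<noteq> 0" "1 - a*C*q \<noteq> 0" using hU[rule_format, of 0] hC[rule_format, of 0] by auto
  have qx: "q ^ Suc (Suc m) = q * x" "q^(2 * Suc m) = x^2" "q * q ^ m = x"
    unfolding x_def by (simp, metis power_mult mult.commute, simp)
  have x1: "1 - x \<noteq> 0" using qpoch_qq_nz[OF hq, of "Suc m"] qx(3) by (simp add: qpoch_def)
  have u1: "1 - U*q*x \<noteq> 0" using hU[rule_format, of "Suc m"] qx by (simp add: mult.assoc)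
  have w1: "1 - a*C*q*x \<noteq> 0" using hC[rule_format, of "Suc m"] qx by (simp add: mult.assoc)
  have Qnz: "Q \<noteq> 0" unfolding Q_def by (rule qpoch_qq_nz[OF hq])
  have d1nz: "d1 \<noteq> 0" unfolding d1_def by (rule dn_nz[OF hU hC])
  have iy: "yy*(1-x) = 1" "uu*(1-U*q*x) = 1" "ww*(1-a*C*q*x) = 1"
    using x1 u1 w1 by (simp_all add: yy_def uu_def ww_def)
  have hA: "(1-a*q)*A2 = A*(1-a*x)"
  proof -
    have "(\<Prod>i<Suc m. 1 - a*q^(i+1)) = A*(1-a*x)" by (simp add: A_def x_def)
    moreover have "(\<Prod>i<Suc m. 1 - a*q^(i+1)) = (1-a*q)*A2"
      unfolding prod.lessThan_Suc_shift A2_def by (simp add: mult_ac)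
    ultimately show ?thesis by simp
  qed
  have ee1: "ee q a (Suc m) = (1-a*x^2)*A" by (simp add: ee_def A_def x_def power2_eq_square)
  have ee2: "ee q (a*q) (Suc m) = (1-a*q*x^2)*A2" by (simp add: ee_def A2_def x_def power2_eq_square mult_ac)
  have nm2: "nm q (a*q) (U*q) C (Suc m) = x*N"
  proof -
    have "nm q (a*q) (U*q) C (Suc m) = (\<Prod>i<Suc m. q * ((U - a*q^i)*(C - q^i)))"
      unfolding nm_def by (intro prod.cong) (auto simp: algebra_simps)
    also have "\<dots> = x*N" unfolding prod.distrib N_def nm_def x_def by simp
    finally show ?thesis .
  qed
  have nm3: "nm q a U C (Suc (Suc m)) = N*((U-a*x)*(C-x))" by (simp add: N_def nm_def x_def)
  have gg3: "gg q (Suc (Suc m)) = G*(-(q*x))" by (simp add: G_def gg_def qx)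
  have dn3: "dn q a U C (Suc (Suc m)) = d1*((1-U*q*x)*(1-a*C*q*x))"
    by (simp add: d1_def dn_def qx mult.assoc)
  have dn3': "dn q a U C (Suc (Suc m)) = (1-U*q)*(1-a*C*q)*d'"
    unfolding dn_def d'_def prod.lessThan_Suc_shift[of _ "Suc m"] by (simp add: mult_ac)
  have Q2: "qpoch q q (Suc m) = Q*(1-x)" by (simp add: Q_def qpoch_Suc qx)
  have id': "inverse d' = (1-U*q)*(1-a*C*q)*inverse d1*uu*ww"
  proof -
    have e: "(1-U*q)*(1-a*C*q)*d' = d1*((1-U*q*x)*(1-a*C*q*x))" using dn3 dn3' by simp
    have "d' = d1*((1-U*q*x)*(1-a*C*q*x)) / ((1-U*q)*(1-a*C*q))" using c0 e[symmetric]
      by (simp add: eq_divide_eq mult.commute)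
    thus ?thesis by (simp add: uu_def ww_def divide_inverse inverse_mult_distrib mult_ac)
  qed
  have T1: "tt q a U C (Suc m) = (1-a*x^2)*A*N*G*W*yy"
    unfolding tt_def ee1 Q2 by (simp add: N_def G_def d1_def W_def yy_def divide_inverse inverse_mult_distrib mult_ac)
  have T2: "(1-a*q)*(1-U*C*q)*tt q (a*q) (U*q) C (Suc m) = (1-U*C*q)*((1-a*q*x^2)*(A*(1-a*x))*(x*N)*G*(1-U*q)*(1-a*C*q)*W*yy*uu*ww)"
  proof -
    have "(1-a*q)*(1-U*C*q)*tt q (a*q) (U*q) C (Suc m) = (1-U*C*q)*((1-a*q*x^2)*((1-a*q)*A2)*(x*N)*G*inverse d'*inverse Q*yy)"
      unfolding tt_def ee2 Q2 nm2 by (simp add: G_def d'_def yy_def divide_inverse inverse_mult_distrib mult_ac)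
    also have "\<dots> = (1-U*C*q)*((1-a*q*x^2)*(A*(1-a*x))*(x*N)*G*(1-U*q)*(1-a*C*q)*W*yy*uu*ww)"
      unfolding hA id' by (simp add: W_def inverse_mult_distrib mult_ac)
    finally show ?thesis .
  qed
  have D1: "DD q a U C (Suc m) = (1-U*q)*(1-a*C*q)*A*N*G*W"
    by (simp add: DD_def A_def N_def G_def d1_def Q_def W_def divide_inverse inverse_mult_distrib mult_ac)
  have D2: "DD q a U C (Suc (Suc m)) = (1-U*q)*(1-a*C*q)*(A*(1-a*x))*(N*((U-a*x)*(C-x)))*(G*(-(q*x)))*W*yy*uu*ww"
  proof -
    have "(\<Prod>i<Suc m. 1 - a*q^(i+1)) = A*(1-a*x)" by (simp add: A_def x_def)
    thus ?thesis unfolding DD_def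
      by (simp only: nm3 gg3 dn3 Q2 diff_Suc_1 if_False nat.simps)
         (simp add: W_def yy_def uu_def ww_def divide_inverse inverse_mult_distrib mult_ac)
  qed
  show ?thesis unfolding Suc T1 D1 D2 T2 by (rule key_alg2[OF iy])
qed


lemma prod_upper: fixes f :: "nat \<Rightarrow> complex"
  assumes "\<And>i. i<n \<Longrightarrow> norm (f i) \<le> c" shows "norm (\<Prod>i<n. f i) \<le> c^n"
proof -
  have "norm (\<Prod>i<n. f i) = (\<Prod>i<n. norm (f i))" by (simp add: prod_norm)
  also have "\<dots> \<le> (\<Prod>i<n. c)" by (rule prod_mono) (use assms in auto)
  also have "\<dots> = c^n" by simp
  finally show ?thesis .
qed

lemma prod_lower: fixes f :: "nat \<Rightarrow> complex"
  assumes "0 \<le> c" "\<And>i. i<n \<Longrightarrow> c \<le> norm (f i)" shows "c^n \<le> norm (\<Prod>i<n. f i)"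
proof -
  have "c^n = (\<Prod>i<n. c)" by simp
  also have "\<dots> \<le> (\<Prod>i<n. norm (f i))" by (rule prod_mono) (use assms in auto)
  also have "\<dots> = norm (\<Prod>i<n. f i)" by (simp add: prod_norm)
  finally show ?thesis .
qed

lemma normpow_le1: fixes q :: complex assumes "norm q < 1" shows "norm (q^j) \<le> 1"
  using assms by (simp add: norm_power power_le_one)

lemma norm_1m_le: fixes z w :: complex assumes "norm w \<le> 1" shows "norm (1 - z*w) \<le> 1 + norm z"
proof -
  have "norm (1 - z*w) \<le> 1 + norm (z*w)" by (metis norm_diff_ineq norm_one norm_triangle_ineq4) 
  also have "norm (z*w) \<le> norm z" using assms by (simp add: norm_mult mult_left_le)
  finally show ?thesis by simp
qed

lemma delta_exists:
  fixes q z :: complex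
  assumes hq: "norm q < 1" and hz: "\<forall>j. 1 - z*q^(j+1) \<noteq> 0"
  shows "\<exists>\<delta>>0. \<delta> \<le> 1 \<and> (\<forall>j. \<delta> \<le> norm (1 - z*q^(j+1)))"
proof -
  have t: "(\<lambda>j. q^(j+1)) \<longlonglongrightarrow> 0" using LIMSEQ_Suc[OF LIMSEQ_power_zero[OF hq]] by simp
  have "(\<lambda>j. z*q^(j+1)) \<longlonglongrightarrow> 0" using tendsto_mult[OF tendsto_const t, of z] by simp
  hence "(\<lambda>j. norm (z*q^(j+1))) \<longlonglongrightarrow> 0" by (rule tendsto_norm_zero)
  hence "eventually (\<lambda>j. norm (z*q^(j+1)) < 1/2) sequentially"
    by (rule order_tendstoD(2)) simp
  then obtain J where J: "\<And>j. j \<ge> J \<Longrightarrow> norm (z*q^(j+1)) < 1/2"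
    by (auto simp: eventually_sequentially)
  define S where "S = insert (1/2) ((\<lambda>j. norm (1 - z*q^(j+1))) ` {..<J})"
  define \<delta> where "\<delta> = Min S"
  have fS: "finite S" "S \<noteq> {}" by (auto simp: S_def)
  have pos: "\<forall>s\<in>S. s > 0" using hz by (auto simp: S_def)
  have "\<delta> > 0" unfolding \<delta>_def using fS pos by (subst Min_gr_iff) auto
  moreover have "\<delta> \<le> 1/2" unfolding \<delta>_def using fS by (intro Min_le) (auto simp: S_def)
  moreover have "\<delta> \<le> norm (1 - z*q^(j+1))" for j
  proof (cases "j < J")
    case True
    thus ?thesis unfolding \<delta>_def using fS by (intro Min_le) (auto simp: S_def)
  next
    case False
    hence "norm (z*q^(j+1)) < 1/2" using J by simp
    moreover have "1 - norm (z*q^(j+1)) \<le> norm (1 - z*q^(j+1))"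
      by (metis norm_one norm_triangle_ineq2)
    ultimately show ?thesis using \<open>\<delta> \<le> 1/2\<close> by linarith
  qed
  ultimately show ?thesis by (intro exI[of _ \<delta>]) auto
qed

lemma tt_bound:
  fixes q a U C :: complex
  assumes hq: "norm q < 1" and hU: "\<forall>j. 1 - U*q^(j+1) \<noteq> 0" and hC: "\<forall>j. 1 - a*C*q^(j+1) \<noteq> 0"
  shows "\<exists>K\<ge>0. \<forall>m n. norm (tt q (a*q^m) (U*q^m) C n) \<le> K^n * norm (gg q n)"
proof -
  obtain d1 where d1: "d1 > 0" "d1 \<le> 1" "\<forall>j. d1 \<le> norm (1 - U*q^(j+1))" using delta_exists[OF hq hU] by auto
  obtain d2 where d2: "d2 > 0" "d2 \<le> 1" "\<forall>j. d2 \<le> norm (1 - (a*C)*q^(j+1))" using delta_exists[OF hq hC] by auto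
  define d where "d = min d1 d2"
  have d: "d > 0" "\<forall>j. d \<le> norm (1 - U*q^(j+1))" "\<forall>j. d \<le> norm (1 - a*C*q^(j+1))"
    using d1 d2 by (auto simp: d_def min.coboundedI1 min.coboundedI2 intro: order.trans)
  have q1: "1 - norm q > 0" using hq by simp
  define K where "K = (1 + norm a) * ((norm U + norm a) * (norm C + 1)) / ((1 - norm q) * (d*d))"
  have K0: "K \<ge> 0" unfolding K_def using q1 d by (intro divide_nonneg_pos) auto
  have qp: "norm (q^j) \<le> 1" for j using normpow_le1[OF hq] .
  have "norm (tt q (a*q^m) (U*q^m) C n) \<le> K^n * norm (gg q n)" for m n
  proof -
    have e: "norm (ee q (a*q^m) n) \<le> (1 + norm a)^n"
    proof (cases n)
      case 0 thus ?thesis by (simp add: ee_def)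
    next
      case (Suc k)
      have f1: "norm (1 - a*q^m*(q^Suc k*q^Suc k)) \<le> 1 + norm a"
        using norm_1m_le[of "q^m*(q^Suc k*q^Suc k)" a] qp[of "m+Suc k+Suc k"] by (simp only: power_add mult.assoc)
      have f2: "norm (\<Prod>i<k. 1 - a*q^m*q^(i+1)) \<le> (1 + norm a)^k"
      proof (rule prod_upper)
        fix i assume "i<k"
        have "norm (q^m*q^(i+1)) \<le> 1" using qp[of "m+(i+1)"] by (simp add: power_add mult_ac)
        thus "norm (1 - a*q^m*q^(i+1)) \<le> 1 + norm a" using norm_1m_le[of "q^m*q^(i+1)" a] by (simp add: mult.assoc)
      qed
      show ?thesis unfolding Suc ee_def using f1 f2
        by (simp add: norm_mult) (intro mult_mono, auto)
    qed
    have nmb: "norm (nm q (a*q^m) (U*q^m) C n) \<le> ((norm U + norm a) * (norm C + 1))^n"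
      unfolding nm_def
    proof (rule prod_upper)
      fix i assume "i < n"
      have "norm (U*q^m - a*q^m*q^i) \<le> norm U + norm a"
      proof -
        have "norm (U*q^m - a*q^m*q^i) \<le> norm (U*q^m) + norm (a*(q^m*q^i))"
          by (metis mult.assoc norm_triangle_ineq4)
        also have "\<dots> \<le> norm U + norm a"
          using qp[of m] qp[of "m+i"] by (intro add_mono) (auto simp: norm_mult power_add mult_left_le)
        finally show ?thesis .
      qed
      moreover have "norm (C - q^i) \<le> norm C + 1"
        using qp[of i] norm_triangle_ineq4[of C "q^i"] by linarith
      ultimately show "norm ((U*q^m - a*q^m*q^i) * (C - q^i)) \<le> (norm U + norm a) * (norm C + 1)"
        by (simp add: norm_mult) (intro mult_mono, auto)
    qed
    have qpb: "(1 - norm q)^n \<le> norm (qpoch q q n)"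
      unfolding qpoch_def
    proof (rule prod_lower)
      show "0 \<le> 1 - norm q" using q1 by simp
      fix i
      have "norm (q*q^i) \<le> norm q" using qp[of i] by (simp add: norm_mult mult_left_le)
      moreover have "1 - norm (q*q^i) \<le> norm (1 - q*q^i)" by (metis norm_one norm_triangle_ineq2)
      ultimately show "1 - norm q \<le> norm (1 - q*q^i)" by linarith
    qed
    have dnb: "(d*d)^n \<le> norm (dn q (a*q^m) (U*q^m) C n)"
      unfolding dn_def
    proof (rule prod_lower)
      show "0 \<le> d*d" using d by simp
      fix i
      have "d \<le> norm (1 - U*q^m*q^(i+1))" using d(2)[rule_format, of "m+i"] by (simp add: power_add mult_ac)
      moreover have "d \<le> norm (1 - a*q^m*C*q^(i+1))" using d(3)[rule_format, of "m+i"] by (simp add: power_add mult_ac)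
      ultimately show "d*d \<le> norm ((1 - U*q^m*q^(i+1)) * (1 - a*q^m*C*q^(i+1)))"
        using d by (simp add: norm_mult) (intro mult_mono, auto)
    qed
    have den_pos: "0 < (1 - norm q)^n * (d*d)^n" using q1 d by simp
    have "norm (tt q (a*q^m) (U*q^m) C n) = norm (ee q (a*q^m) n) * norm (nm q (a*q^m) (U*q^m) C n) * norm (gg q n) / (norm (qpoch q q n) * norm (dn q (a*q^m) (U*q^m) C n))"
      by (simp add: tt_def norm_mult norm_divide)
    also have "\<dots> \<le> (1 + norm a)^n * ((norm U + norm a) * (norm C + 1))^n * norm (gg q n) / ((1 - norm q)^n * (d*d)^n)"
      by (intro frac_le mult_mono e nmb qpb dnb den_pos mult_nonneg_nonneg) auto
    also have "\<dots> = K^n * norm (gg q n)"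
      unfolding K_def by (simp add: power_divide power_mult_distrib)
    finally show ?thesis .
  qed
  thus ?thesis using K0 by blast
qed


lemma M_summable:
  fixes q :: complex and K :: real assumes hq: "norm q < 1" and K0: "K \<ge> 0"
  shows "summable (\<lambda>n. K^n * norm (gg q n))"
proof -
  have t: "(\<lambda>n. K * norm q ^ Suc n) \<longlonglongrightarrow> 0"
    using tendsto_mult[OF tendsto_const LIMSEQ_Suc[OF LIMSEQ_power_zero[of "norm q"]], of K] hq by simp
  hence "eventually (\<lambda>n. K * norm q ^ Suc n < 1/2) sequentially"
    by (rule order_tendstoD(2)) simp
  then obtain N where N: "\<And>n. n \<ge> N \<Longrightarrow> K * norm q ^ Suc n < 1/2"
    by (auto simp: eventually_sequentially)
  show ?thesis
  proof (rule summable_ratio_test[of "1/2" N])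
    fix n assume "n \<ge> N"
    have g: "norm (gg q (Suc n)) = norm (gg q n) * norm q ^ Suc n"
      by (simp add: gg_def norm_mult norm_power)
    have "norm (K ^ Suc n * norm (gg q (Suc n))) = (K * norm q ^ Suc n) * (K^n * norm (gg q n))"
      using K0 by (simp add: g abs_mult power_abs)
    also have "\<dots> \<le> 1/2 * (K^n * norm (gg q n))"
      using N[OF \<open>n \<ge> N\<close>] K0 by (intro mult_right_mono) auto
    also have "\<dots> = 1/2 * norm (K^n * norm (gg q n))" using K0 by (simp add: abs_mult power_abs)
    finally show "norm (K ^ Suc n * norm (gg q (Suc n))) \<le> 1/2 * norm (K^n * norm (gg q n))" .
  qed simp
qed

lemma tt_summable:
  fixes q a U C :: complex
  assumes hq: "norm q < 1" and hU: "\<forall>j. 1 - U*q^(j+1) \<noteq> 0" and hC: "\<forall>j. 1 - a*C*q^(j+1) \<noteq> 0"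
  shows "summable (tt q (a*q^m) (U*q^m) C)"
proof -
  obtain K where K: "K \<ge> 0" "\<forall>m n. norm (tt q (a*q^m) (U*q^m) C n) \<le> K^n * norm (gg q n)"
    using tt_bound[OF hq hU hC] by blast
  show ?thesis
    by (rule summable_comparison_test[OF _ M_summable[OF hq K(1)]]) (use K(2) in auto)
qed

lemma DD_lim:
  fixes q a U C :: complex
  assumes hq: "norm q < 1" and hU: "\<forall>j. 1 - U*q^(j+1) \<noteq> 0" and hC: "\<forall>j. 1 - a*C*q^(j+1) \<noteq> 0"
    and sm: "summable (tt q a U C)"
  shows "DD q a U C \<longlonglongrightarrow> 0"
proof -
  define c0 where "c0 = (1-U*q)*(1-a*C*q)"
  have t0: "(\<lambda>n. tt q a U C (Suc n)) \<longlonglongrightarrow> 0"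
    using LIMSEQ_Suc[OF summable_LIMSEQ_zero[OF sm]] .
  have qs: "(\<lambda>n. q ^ Suc n) \<longlonglongrightarrow> 0" using LIMSEQ_Suc[OF LIMSEQ_power_zero[OF hq]] .
  have gen: "(\<lambda>n. c0 * (1 - s n) * tt q a U C (Suc n) / (1 - a * (s n * s n))) \<longlonglongrightarrow> 0"
    if s: "s \<longlonglongrightarrow> 0" for s :: "nat \<Rightarrow> complex"
  proof -
    have "(\<lambda>n. c0 * (1 - s n) * tt q a U C (Suc n) / (1 - a * (s n * s n))) \<longlonglongrightarrow> c0 * (1 - 0) * 0 / (1 - a * (0 * 0))"
      by (intro tendsto_intros t0 s) simp
    thus ?thesis by simp
  qed
  have gen2: "(\<lambda>n. 1 - a * (s n * s n)) \<longlonglongrightarrow> 1"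
    if s: "s \<longlonglongrightarrow> 0" for s :: "nat \<Rightarrow> complex"
  proof -
    have "(\<lambda>n. 1 - a * (s n * s n)) \<longlonglongrightarrow> 1 - a * (0 * 0)"
      by (intro tendsto_intros s)
    thus ?thesis by simp
  qed
  have lim: "(\<lambda>n. c0 * (1 - q^Suc n) * tt q a U C (Suc n) / (1 - a * (q^Suc n * q^Suc n))) \<longlonglongrightarrow> 0"
    using gen[OF qs] .
  have ev: "eventually (\<lambda>n. 1 - a * (q^Suc n * q^Suc n) \<noteq> 0) sequentially"
  proof -
    have "(\<lambda>n. 1 - a * (q^Suc n * q^Suc n)) \<longlonglongrightarrow> 1" using gen2[OF qs] .
    hence "eventually (\<lambda>n. dist (1 - a * (q^Suc n * q^Suc n)) 1 < 1) sequentially"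
      by (intro tendstoD) auto
    thus ?thesis by eventually_elim (auto simp: dist_norm)
  qed
  have eq: "eventually (\<lambda>n. c0 * (1 - q^Suc n) * tt q a U C (Suc n) / (1 - a * (q^Suc n * q^Suc n)) = DD q a U C (Suc n)) sequentially"
    using ev
  proof eventually_elim
    case (elim n)
    define x where "x = q^Suc n"
    define A where "A = (\<Prod>i<n. 1 - a*q^(i+1))"
    define N where "N = nm q a U C (Suc n)"
    define G where "G = gg q (Suc n)"
    define Q where "Q = qpoch q q n"
    define d where "d = dn q a U C (Suc n)"
    have x1: "1 - x \<noteq> 0" using qpoch_qq_nz[OF hq, of "Suc (Suc n)"] by (simp add: qpoch_def x_def)
    have Q0: "Q \<noteq> 0" unfolding Q_def by (rule qpoch_qq_nz[OF hq])
    have d0: "d \<noteq> 0" unfolding d_def by (rule dn_nz[OF hU hC])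
    have Q2: "qpoch q q (Suc n) = Q * (1 - x)" by (simp add: qpoch_Suc x_def Q_def)
    have T: "tt q a U C (Suc n) = (1-a*(x*x))*A*N*G/(Q*(1-x)*d)"
      unfolding tt_def Q2 by (simp add: ee_def x_def A_def N_def G_def d_def)
    have D: "DD q a U C (Suc n) = c0*A*N*G/(Q*d)"
      by (simp add: DD_def c0_def A_def N_def G_def d_def Q_def)
    have e1: "c0 * (1 - x) * tt q a U C (Suc n) = (1 - a*(x*x)) * DD q a U C (Suc n)"
      unfolding T D using x1 Q0 d0 by (simp add: field_simps)
    have e2: "1 - a*(x*x) \<noteq> 0" using elim by (simp add: x_def)
    show ?case unfolding x_def[symmetric] using e1 e2 by (simp add: divide_eq_eq mult.commute)
  qed
  have "(\<lambda>n. DD q a U C (Suc n)) \<longlonglongrightarrow> 0"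
    using Lim_transform_eventually[OF lim eq] .
  thus ?thesis by (rule LIMSEQ_imp_Suc)
qed

lemma sum_step:
  fixes q a U C :: complex
  assumes hq: "norm q < 1" and hU: "\<forall>j. 1 - U*q^(j+1) \<noteq> 0" and hC: "\<forall>j. 1 - a*C*q^(j+1) \<noteq> 0"
    and s1: "summable (tt q a U C)" and s2: "summable (tt q (a*q) (U*q) C)"
  shows "(1-U*q)*(1-a*C*q)* suminf (tt q a U C) = (1-a*q)*(1-U*C*q)* suminf (tt q (a*q) (U*q) C)"
proof -
  have A: "(\<lambda>n. (1-U*q)*(1-a*C*q)*tt q a U C n - (1-a*q)*(1-U*C*q)*tt q (a*q) (U*q) C n)
        sums ((1-U*q)*(1-a*C*q)* suminf (tt q a U C) - (1-a*q)*(1-U*C*q)* suminf (tt q (a*q) (U*q) C))"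
    by (intro sums_diff sums_mult summable_sums s1 s2)
  have B: "(\<lambda>n. (1-U*q)*(1-a*C*q)*tt q a U C n - (1-a*q)*(1-U*C*q)*tt q (a*q) (U*q) C n) sums 0"
    using telescope_sums'[OF DD_lim[OF hq hU hC s1]] step[OF hq hU hC] by (simp add: DD_def)
  show ?thesis using sums_unique2[OF A B] by simp
qed



lemma tt_cont:
  fixes q C :: complex and f g :: "nat \<Rightarrow> complex"
  assumes hq: "norm q < 1" and f: "f \<longlonglongrightarrow> 0" and g: "g \<longlonglongrightarrow> 0"
  shows "(\<lambda>m. tt q (f m) (g m) C k) \<longlonglongrightarrow> (if k = 0 then 1 else 0)"
proof (cases k)
  case 0
  thus ?thesis by (simp add: tt_def ee_def nm_def dn_def gg_def qpoch_def)
next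
  case (Suc k')
  have eq: "(\<lambda>m. tt q (f m) (g m) C k) = (\<lambda>m. ((1 - f m * (q^k*q^k)) * (\<Prod>i<k'. 1 - f m*q^(i+1))) * (\<Prod>i<k. (g m - f m*q^i)*(C - q^i)) * gg q k / (qpoch q q k * (\<Prod>i<k. (1 - g m*q^(i+1))*(1 - f m*C*q^(i+1)))))"
    unfolding tt_def ee_def nm_def dn_def using Suc by simp
  have "(\<lambda>m. ((1 - f m * (q^k*q^k)) * (\<Prod>i<k'. 1 - f m*q^(i+1))) * (\<Prod>i<k. (g m - f m*q^i)*(C - q^i)) * gg q k / (qpoch q q k * (\<Prod>i<k. (1 - g m*q^(i+1))*(1 - f m*C*q^(i+1)))))
     \<longlonglongrightarrow> ((1 - 0 * (q^k*q^k)) * (\<Prod>i<k'. 1 - 0*q^(i+1))) * (\<Prod>i<k. (0 - 0*q^i)*(C - q^i)) * gg q k / (qpoch q q k * (\<Prod>i<k. (1 - 0*q^(i+1))*(1 - 0*C*q^(i+1))))"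
    by (intro tendsto_intros f g) (simp add: qpoch_qq_nz[OF hq])
  moreover have "((1 - 0 * (q^k*q^k)) * (\<Prod>i<k'. 1 - 0*q^(i+1))) * (\<Prod>i<k. (0 - 0*q^i)*(C - q^i)) * gg q k / (qpoch q q k * (\<Prod>i<k. (1 - 0*q^(i+1))*(1 - 0*C*q^(i+1)))) = (if k = 0 then 1 else 0)"
    using Suc by simp
  ultimately show ?thesis unfolding eq by simp
qed

lemma S_lim:
  fixes q a U C :: complex
  assumes hq: "norm q < 1" and hU: "\<forall>j. 1 - U*q^(j+1) \<noteq> 0" and hC: "\<forall>j. 1 - a*C*q^(j+1) \<noteq> 0"
  shows "(\<lambda>m. suminf (tt q (a*q^m) (U*q^m) C)) \<longlonglongrightarrow> 1"
proof -
  obtain K where K: "K \<ge> 0" "\<forall>m n. norm (tt q (a*q^m) (U*q^m) C n) \<le> K^n * norm (gg q n)"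
    using tt_bound[OF hq hU hC] by blast
  have f: "(\<lambda>m. a*q^m) \<longlonglongrightarrow> 0" using tendsto_mult[OF tendsto_const LIMSEQ_power_zero[OF hq], of a] by simp
  have g: "(\<lambda>m. U*q^m) \<longlonglongrightarrow> 0" using tendsto_mult[OF tendsto_const LIMSEQ_power_zero[OF hq], of U] by simp
  have T: "((\<lambda>m. suminf (\<lambda>k. tt q (a*q^m) (U*q^m) C k)) \<longlongrightarrow> suminf (\<lambda>k. if k = 0 then 1 else (0::complex))) sequentially"
  proof (rule tannerys_theorem[THEN conjunct2, THEN conjunct2])
    show "\<And>k. (\<lambda>m. tt q (a*q^m) (U*q^m) C k) \<longlonglongrightarrow> (if k = 0 then 1 else 0)"
      by (rule tt_cont[OF hq f g])
    show "eventually (\<lambda>(k,m). norm (tt q (a*q^m) (U*q^m) C k) \<le> K^k * norm (gg q k)) (at_top \<times>\<^sub>F sequentially)"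
      by (intro always_eventually) (use K in auto)
    show "summable (\<lambda>k. K^k * norm (gg q k))" by (rule M_summable[OF hq K(1)])
  qed simp
  have "(\<lambda>k. if k = 0 then 1 else (0::complex)) sums 1"
    using sums_single[of 0 "\<lambda>_. 1::complex"] by simp
  hence "suminf (\<lambda>k. if k = 0 then 1 else (0::complex)) = 1" by (rule sums_unique[symmetric])
  thus ?thesis using T by simp
qed

lemma iter:
  fixes q a U C :: complex
  assumes hq: "norm q < 1" and hU: "\<forall>j. 1 - U*q^(j+1) \<noteq> 0" and hC: "\<forall>j. 1 - a*C*q^(j+1) \<noteq> 0"
  shows "suminf (tt q a U C) * (qpoch (U*q) q m * qpoch (a*C*q) q m)
       = qpoch (a*q) q m * qpoch (U*C*q) q m * suminf (tt q (a*q^m) (U*q^m) C)"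
proof (induction m)
  case 0 thus ?case by (simp add: qpoch_def)
next
  case (Suc m)
  have hUm: "\<forall>j. 1 - (U*q^m)*q^(j+1) \<noteq> 0"
  proof
    fix j show "1 - (U*q^m)*q^(j+1) \<noteq> 0" using hU[rule_format, of "m+j"] by (simp add: power_add mult_ac)
  qed
  have hCm: "\<forall>j. 1 - (a*q^m)*C*q^(j+1) \<noteq> 0"
  proof
    fix j show "1 - (a*q^m)*C*q^(j+1) \<noteq> 0" using hC[rule_format, of "m+j"] by (simp add: power_add mult_ac)
  qed
  have e1: "a*q^m*q = a*q^Suc m" "U*q^m*q = U*q^Suc m" by (simp_all add: mult_ac)
  have s1: "summable (tt q (a*q^m) (U*q^m) C)" by (rule tt_summable[OF hq hU hC])
  have s2: "summable (tt q (a*q^m*q) (U*q^m*q) C)" unfolding e1 by (rule tt_summable[OF hq hU hC])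
  have st: "(1-U*q^m*q)*(1-a*q^m*C*q) * suminf (tt q (a*q^m) (U*q^m) C)
      = (1-a*q^m*q)*(1-U*q^m*C*q) * suminf (tt q (a*q^Suc m) (U*q^Suc m) C)"
    using sum_step[OF hq hUm hCm s1 s2] unfolding e1 .
  define S0 where "S0 = suminf (tt q a U C)"
  define Sm where "Sm = suminf (tt q (a*q^m) (U*q^m) C)"
  define S1 where "S1 = suminf (tt q (a*q^Suc m) (U*q^Suc m) C)"
  define x where "x = q^m"
  have IH: "S0 * (qpoch (U*q) q m * qpoch (a*C*q) q m) = qpoch (a*q) q m * qpoch (U*C*q) q m * Sm"
    using Suc.IH unfolding S0_def Sm_def .
  have st': "(1-U*x*q)*(1-a*x*C*q) * Sm = (1-a*x*q)*(1-U*x*C*q) * S1"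
    using st unfolding Sm_def S1_def x_def .
  show ?case unfolding S0_def[symmetric] S1_def[symmetric] qpoch_Suc x_def[symmetric]
    using IH st' by algebra
qed

theorem master:
  fixes q a U C :: complex
  assumes hq: "norm q < 1" and hU: "\<forall>j. 1 - U*q^(j+1) \<noteq> 0" and hC: "\<forall>j. 1 - a*C*q^(j+1) \<noteq> 0"
  shows "tt q a U C sums (qpoch_inf (a*q) q * qpoch_inf (U*C*q) q / (qpoch_inf (U*q) q * qpoch_inf (a*C*q) q))"
proof -
  define S0 where "S0 = suminf (tt q a U C)"
  have L1: "(\<lambda>m. S0 * (qpoch (U*q) q m * qpoch (a*C*q) q m)) \<longlonglongrightarrow> S0 * (qpoch_inf (U*q) q * qpoch_inf (a*C*q) q)"
    by (intro tendsto_intros qpoch_conv(1)[OF hq])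
  have L2: "(\<lambda>m. qpoch (a*q) q m * qpoch (U*C*q) q m * suminf (tt q (a*q^m) (U*q^m) C)) \<longlonglongrightarrow> qpoch_inf (a*q) q * qpoch_inf (U*C*q) q * 1"
    by (intro tendsto_intros qpoch_conv(1)[OF hq] S_lim[OF hq hU hC])
  have eq: "S0 * (qpoch_inf (U*q) q * qpoch_inf (a*C*q) q) = qpoch_inf (a*q) q * qpoch_inf (U*C*q) q"
    using LIMSEQ_unique[OF L1 L2[folded iter[OF hq hU hC, folded S0_def]]] by simp
  have n1: "qpoch_inf (U*q) q \<noteq> 0"
    by (rule qpoch_inf_nz[OF hq]) (use hU in \<open>simp add: mult.assoc\<close>)
  have n2: "qpoch_inf (a*C*q) q \<noteq> 0"
    by (rule qpoch_inf_nz[OF hq]) (use hC in \<open>simp add: mult.assoc\<close>)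
  have sm: "summable (tt q a U C)" using tt_summable[OF hq hU hC, of 0] by simp
  have "S0 = qpoch_inf (a*q) q * qpoch_inf (U*C*q) q / (qpoch_inf (U*q) q * qpoch_inf (a*C*q) q)"
    using eq n1 n2 by (simp add: eq_divide_eq)
  thus ?thesis using summable_sums[OF sm] unfolding S0_def by simp
qed


lemma ee_alt: fixes q a :: complex assumes "a \<noteq> 1"
  shows "ee q a n = (1 - a*q^(2*n)) * qpoch a q n / (1-a)"
proof (cases n)
  case 0 thus ?thesis using assms by (simp add: ee_def qpoch_def)
next
  case (Suc m)
  have "qpoch a q (Suc m) = (1-a) * (\<Prod>i<m. 1 - a*q^(i+1))"
    unfolding qpoch_def prod.lessThan_Suc_shift by simp
  moreover have "q^(2*n) = q^n*q^n" by (simp add: power_add[symmetric] mult_2)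
  moreover have "q^m*q^m = q^(2*m)" by (simp add: power_add[symmetric] mult_2)
  ultimately show ?thesis using assms Suc by (simp add: ee_def)
qed

lemma tt_alt: fixes q a U C :: complex assumes "a \<noteq> 1"
  shows "tt q a U C n = (1 - a*q^(2*n)) * qpoch a q n / (1-a) * (nm q a U C n * gg q n) / (qpoch q q n * dn q a U C n)"
  unfolding tt_def ee_alt[OF assms] by (simp add: mult_ac)

lemma exp1: "Suc n * (3 * Suc n - 1) div 2 = n * (3*n - 1) div 2 + (3*n+1)"
proof -
  have "Suc n * (3 * Suc n - 1) = n * (3*n - 1) + (3*n+1) * 2"
    by (cases n) (simp_all add: algebra_simps)
  thus ?thesis by simp
qed

lemma nmgg1: fixes q k :: complex
  shows "nm q k 0 0 n * gg q n = (-1)^n * k^n * q^(n*(3*n-1) div 2)"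
proof (induction n)
  case 0 thus ?case by (simp add: nm_def gg_def)
next
  case (Suc n)
  have "nm q k 0 0 (Suc n) * gg q (Suc n) = (nm q k 0 0 n * gg q n) * (- k * q^(3*n+1))"
    by (simp add: nm_def gg_def power_add power_mult_distrib mult_ac numeral_3_eq_3)
  also have "\<dots> = (-1)^Suc n * k^Suc n * q^(Suc n*(3*Suc n-1) div 2)"
    unfolding Suc.IH exp1 by (simp add: power_add mult_ac)
  finally show ?case .
qed

lemma formula1: fixes q k :: complex assumes hq: "norm q < 1" and hk: "k \<noteq> 1"
  shows "(\<lambda>n. (1 - k * q ^ (2*n)) * qpoch k q n / ((1 - k) * qpoch q q n)
          * (-1) ^ n * k ^ n * q ^ (n * (3*n - 1) div 2))
      sums qpoch_inf (k*q) q"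
proof -
  have m: "tt q k 0 0 sums (qpoch_inf (k*q) q * qpoch_inf (0*0*q) q / (qpoch_inf (0*q) q * qpoch_inf (k*0*q) q))"
    by (rule master[OF hq]) auto
  have e: "tt q k 0 0 n = (1 - k * q ^ (2*n)) * qpoch k q n / ((1 - k) * qpoch q q n)
          * (-1) ^ n * k ^ n * q ^ (n * (3*n - 1) div 2)" for n
  proof -
    have "dn q k 0 0 n = 1" by (simp add: dn_def)
    thus ?thesis unfolding tt_alt[OF hk] nmgg1 by (simp add: mult_ac)
  qed
  show ?thesis using m unfolding e by (simp add: qpoch_inf_0)
qed


lemma prod_factor: "(\<And>i. f i = c * g i) \<Longrightarrow> (\<Prod>i<n. f i) = c^n * (\<Prod>i<n. g i)"
  by (simp add: prod.distrib)

lemma nz_small: fixes z :: complex shows "norm z < 1 \<Longrightarrow> 1 - z \<noteq> 0" "norm z < 1 \<Longrightarrow> 1 + z \<noteq> 0"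
  by (auto simp: add_eq_0_iff)

lemma norm_pow_lt: fixes q :: complex shows "norm q < 1 \<Longrightarrow> n > 0 \<Longrightarrow> norm (q^n) < 1"
  by (simp add: norm_power power_less_one_iff)

lemma norm_q2: fixes q :: complex shows "norm q < 1 \<Longrightarrow> norm (q^2) < 1"
  by (rule norm_pow_lt) auto

lemma qpoch_pm: "qpoch x q n * qpoch (-x) q n = qpoch (x^2) (q^2) n"
  unfolding qpoch_def prod.distrib[symmetric]
  by (rule prod.cong) (simp_all add: power2_eq_square power_mult_distrib algebra_simps)

lemma qpoch_double: "qpoch x q (2*n) = qpoch x (q^2) n * qpoch (x*q) (q^2) n"
proof (induction n)
  case 0 thus ?case by (simp add: qpoch_def)
next
  case (Suc n)
  have "2 * Suc n = Suc (Suc (2*n))" by simp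
  hence "qpoch x q (2 * Suc n) = qpoch x q (2*n) * (1 - x*q^(2*n)) * (1 - x*q^(Suc (2*n)))"
    by (simp add: qpoch_Suc)
  also have "\<dots> = qpoch x (q^2) (Suc n) * qpoch (x*q) (q^2) (Suc n)"
  proof -
    have qq: "(q^2)^n = q^(2*n)" by (simp only: power_mult)
    show ?thesis unfolding Suc.IH qpoch_Suc qq power_Suc by (simp only: ac_simps)
  qed
  finally show ?case .
qed

lemma qinf_pm: fixes x q :: complex assumes hq: "norm q < 1"
  shows "qpoch_inf x q * qpoch_inf (-x) q = qpoch_inf (x^2) (q^2)"
proof -
  have "(\<lambda>n. qpoch x q n * qpoch (-x) q n) \<longlonglongrightarrow> qpoch_inf x q * qpoch_inf (-x) q"
    by (intro tendsto_mult qpoch_conv(1)[OF hq])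
  moreover have "(\<lambda>n. qpoch x q n * qpoch (-x) q n) \<longlonglongrightarrow> qpoch_inf (x^2) (q^2)"
    unfolding qpoch_pm by (rule qpoch_conv(1)[OF norm_q2[OF hq]])
  ultimately show ?thesis by (rule LIMSEQ_unique)
qed

lemma qinf_sq: fixes x q :: complex assumes hq: "norm q < 1"
  shows "qpoch_inf x (q^2) * qpoch_inf (x*q) (q^2) = qpoch_inf x q"
proof -
  have "(\<lambda>n. qpoch x (q^2) n * qpoch (x*q) (q^2) n) \<longlonglongrightarrow> qpoch_inf x (q^2) * qpoch_inf (x*q) (q^2)"
    by (intro tendsto_mult qpoch_conv(1)[OF norm_q2[OF hq]])
  moreover have "(\<lambda>n. qpoch x (q^2) n * qpoch (x*q) (q^2) n) \<longlonglongrightarrow> qpoch_inf x q"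
  proof -
    have sm: "strict_mono (\<lambda>n::nat. 2*n)" by (rule strict_monoI) simp
    have "(\<lambda>n. qpoch x q (2*n)) \<longlonglongrightarrow> qpoch_inf x q"
      using LIMSEQ_subseq_LIMSEQ[OF qpoch_conv(1)[OF hq] sm] by (simp add: o_def)
    thus ?thesis unfolding qpoch_double .
  qed
  ultimately show ?thesis by (rule LIMSEQ_unique)
qed

lemma G0: "(\<Prod>i<n. -(q^i)) * gg q n = (q::complex)^(n^2)"
proof (induction n)
  case 0 thus ?case by (simp add: gg_def)
next
  case (Suc n)
  have "(\<Prod>i<Suc n. -(q^i)) * gg q (Suc n) = ((\<Prod>i<n. -(q^i)) * gg q n) * (q*q^n*q^n)"
    by (simp add: gg_def mult_ac)
  also have "\<dots> = q^((Suc n)^2)"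
  proof -
    have e: "(Suc n)^2 = Suc (n^2 + n + n)" by (simp add: power2_eq_square)
    show ?thesis unfolding Suc.IH e power_Suc power_add by (simp only: ac_simps)
  qed
  finally show ?case .
qed

lemma nm_split: "nm q a U C n = (\<Prod>i<n. U - a*q^i) * (\<Prod>i<n. C - q^i)"
  by (simp add: nm_def prod.distrib)


lemma formula3: fixes q k :: complex assumes hq: "norm q < 1" and hk: "k \<noteq> 1"
  and hyp: "\<forall>n. qpoch (-k*q) q n \<noteq> 0"
  shows "(\<lambda>n. (1 - k * q ^ (2*n)) * (qpoch (-1) q n * qpoch k q n)
          / ((1 - k) * (qpoch (-k*q) q n * qpoch q q n))
          * (-1) ^ n * k ^ n * q ^ (n^2))
      sums (qpoch_inf (k*q) q / qpoch_inf (-k*q) q)"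
proof -
  have h: "\<forall>i. 1 - (-k*q)*q^i \<noteq> 0" using hyp qpoch_nz_iff by blast
  have m: "tt q k (-k) 0 sums (qpoch_inf (k*q) q * qpoch_inf ((-k)*0*q) q / (qpoch_inf ((-k)*q) q * qpoch_inf (k*0*q) q))"
    by (rule master[OF hq]) (use h in \<open>auto simp: mult_ac\<close>)
  have e: "tt q k (-k) 0 n = (1 - k * q ^ (2*n)) * (qpoch (-1) q n * qpoch k q n)
          / ((1 - k) * (qpoch (-k*q) q n * qpoch q q n))
          * (-1) ^ n * k ^ n * q ^ (n^2)" for n
  proof -
    have d: "dn q k (-k) 0 n = qpoch (-k*q) q n" by (simp add: dn_def qpoch_def mult_ac)
    have p1: "(\<Prod>i<n. -k - k*q^i) = (-k)^n * qpoch (-1) q n"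
      unfolding qpoch_def by (rule prod_factor) (simp add: algebra_simps)
    have ng: "nm q k (-k) 0 n * gg q n = qpoch (-1) q n * ((-1)^n * k^n * q^(n^2))"
    proof -
      have c: "(\<Prod>i<n. 0 - q^i) = (\<Prod>i<n. -(q^i))" by simp
      have "nm q k (-k) 0 n * gg q n = (\<Prod>i<n. -k - k*q^i) * ((\<Prod>i<n. -(q^i)) * gg q n)"
        unfolding nm_split c by (simp only: ac_simps)
      also have "\<dots> = ((-k)^n * qpoch (-1) q n) * q^(n^2)" unfolding p1 G0 ..
      also have "\<dots> = qpoch (-1) q n * ((-1)^n * k^n * q^(n^2))" by (simp only: power_minus[of k n] ac_simps)
      finally show ?thesis .
    qed
    show ?thesis unfolding tt_alt[OF hk] ng d by (simp add: mult_ac)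
  qed
  show ?thesis using m unfolding e by (simp add: qpoch_inf_0)
qed


lemma formula4: fixes q k :: complex assumes hq: "norm q < 1" and hk: "k \<noteq> 1"
  shows "(\<lambda>n. (1 - k * q ^ (2*n)) * qpoch (k^2) (q^2) n / ((1 - k) * qpoch (q^2) (q^2) n)
          * (-1) ^ n * q ^ (n^2))
      sums (qpoch_inf (k*q) q * qpoch_inf q (q^2))"
proof -
  have h: "\<forall>j. 1 - (-1)*q^(j+1) \<noteq> 0"
  proof
    fix j show "1 - (-1)*q^(j+1) \<noteq> 0" using nz_small(2)[OF norm_pow_lt[OF hq, of "Suc j"]] by simp
  qed
  have m: "tt q k (-1) 0 sums (qpoch_inf (k*q) q * qpoch_inf ((-1)*0*q) q / (qpoch_inf ((-1)*q) q * qpoch_inf (k*0*q) q))"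
    by (rule master[OF hq h]) simp
  have e: "tt q k (-1) 0 n = (1 - k * q ^ (2*n)) * qpoch (k^2) (q^2) n / ((1 - k) * qpoch (q^2) (q^2) n)
          * (-1) ^ n * q ^ (n^2)" for n
  proof -
    have d: "dn q k (-1) 0 n = qpoch (-q) q n" by (simp add: dn_def qpoch_def mult_ac)
    have p1: "(\<Prod>i<n. -1 - k*q^i) = (-1)^n * qpoch (-k) q n"
      unfolding qpoch_def by (rule prod_factor) (simp add: algebra_simps)
    have ng: "nm q k (-1) 0 n * gg q n = qpoch (-k) q n * ((-1)^n * q^(n^2))"
    proof -
      have c: "(\<Prod>i<n. 0 - q^i) = (\<Prod>i<n. -(q^i))" by simp
      have "nm q k (-1) 0 n * gg q n = (\<Prod>i<n. -1 - k*q^i) * ((\<Prod>i<n. -(q^i)) * gg q n)"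
        unfolding nm_split c by (simp only: ac_simps)
      also have "\<dots> = ((-1)^n * qpoch (-k) q n) * q^(n^2)" unfolding p1 G0 ..
      also have "\<dots> = qpoch (-k) q n * ((-1)^n * q^(n^2))" by (simp only: ac_simps)
      finally show ?thesis .
    qed
    have a1: "qpoch k q n * qpoch (-k) q n = qpoch (k^2) (q^2) n" by (rule qpoch_pm)
    have a2: "qpoch q q n * qpoch (-q) q n = qpoch (q^2) (q^2) n" by (rule qpoch_pm)
    have nz: "qpoch (-k) q n \<noteq> 0 \<or> True" by simp
    have "tt q k (-1) 0 n = (1 - k*q^(2*n)) * (qpoch k q n * qpoch (-k) q n) / ((1-k) * (qpoch q q n * qpoch (-q) q n)) * (-1)^n * q^(n^2)"
      unfolding tt_alt[OF hk] ng d by (simp add: mult_ac)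
    thus ?thesis unfolding a1 a2 .
  qed
  have E: "qpoch_inf q (q^2) * qpoch_inf (-q) q = 1"
  proof -
    have s: "qpoch_inf q (q^2) * qpoch_inf (q^2) (q^2) = qpoch_inf q q" using qinf_sq[OF hq, of q] by (simp add: power2_eq_square)
    have p: "qpoch_inf q q * qpoch_inf (-q) q = qpoch_inf (q^2) (q^2)" by (rule qinf_pm[OF hq])
    have nz: "qpoch_inf (q^2) (q^2) \<noteq> 0"
    proof (rule qpoch_inf_nz[OF norm_q2[OF hq]])
      fix i
      have "norm (q^(2*i+2)) < 1" by (rule norm_pow_lt[OF hq]) simp
      moreover have "q^2*(q^2)^i = q^(2*i+2)" by (simp only: power_mult[symmetric] power_add[symmetric] add.commute)
      ultimately show "1 - q^2*(q^2)^i \<noteq> 0" using nz_small(1) by metis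
    qed
    have "(qpoch_inf q (q^2) * qpoch_inf (-q) q) * qpoch_inf (q^2) (q^2) = 1 * qpoch_inf (q^2) (q^2)"
      using s p by (metis mult.assoc mult.commute mult_1)
    thus ?thesis using nz by simp
  qed
  have R: "qpoch_inf (k*q) q * qpoch_inf ((-1)*0*q) q / (qpoch_inf ((-1)*q) q * qpoch_inf (k*0*q) q) = qpoch_inf (k*q) q * qpoch_inf q (q^2)"
  proof -
    have "qpoch_inf (-q) q \<noteq> 0" using E by auto
    thus ?thesis using E by (simp add: qpoch_inf_0 field_simps)
  qed
  show ?thesis using m unfolding e R .
qed


lemma le_2sq: "n \<le> 2*n^2" for n :: nat
  by (cases n) (auto simp: power2_eq_square)

lemma pw_aux: fixes q c :: complex assumes "q \<noteq> 0" and "m \<le> e"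
  shows "(c/q)^m * q^e = c^m * q^(e - m)"
proof -
  have "q^e = q^(e-m) * q^m" using assms(2) by (simp add: power_add[symmetric])
  hence "(c/q)^m * q^e = ((c/q)^m * q^m) * q^(e-m)" by (simp only: ac_simps)
  also have "(c/q)^m * q^m = ((c/q)*q)^m" by (rule power_mult_distrib[symmetric])
  also have "(c/q)*q = c" using assms(1) by simp
  finally show ?thesis .
qed

lemma hyp_pt: "\<forall>n. qpoch x p n \<noteq> 0 \<Longrightarrow> 1 - x*p^i \<noteq> 0"
  using qpoch_nz_iff by blast

lemma formula2_nz: fixes q k :: complex assumes hq: "norm q < 1" and hk: "k \<noteq> 1" and q0: "q \<noteq> 0"
  and hyp: "\<forall>n. qpoch (-k*q) (q^2) n \<noteq> 0"
  shows "(\<lambda>n. (1 - k * q ^ (4*n)) * (qpoch (-q) (q^2) n * qpoch k (q^2) n)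
          / ((1 - k) * (qpoch (-k*q) (q^2) n * qpoch (q^2) (q^2) n))
          * (-1) ^ n * k ^ n * q ^ (2*n^2 - n))
      sums (qpoch_inf (k*q^2) (q^2) / qpoch_inf (-k*q) (q^2))"
proof -
  define p where "p = q^2"
  have hp: "norm p < 1" unfolding p_def by (rule norm_q2[OF hq])
  have Up: "(-k/q)*p = -k*q" using q0 by (simp add: p_def power2_eq_square)
  have Ui: "(-k/q)*p^(i+1) = (-k*q)*p^i" for i
  proof -
    have "(-k/q)*p^(i+1) = ((-k/q)*p)*p^i" by (simp add: mult_ac)
    thus ?thesis unfolding Up .
  qed
  have hU: "\<forall>j. 1 - (-k/q)*p^(j+1) \<noteq> 0" unfolding Ui using hyp_pt[OF hyp[folded p_def]] by blast
  have m: "tt p k (-k/q) 0 sums (qpoch_inf (k*p) p * qpoch_inf ((-k/q)*0*p) p / (qpoch_inf ((-k/q)*p) p * qpoch_inf (k*0*p) p))"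
    by (rule master[OF hp hU]) simp
  have e: "tt p k (-k/q) 0 n = (1 - k * q ^ (4*n)) * (qpoch (-q) p n * qpoch k p n)
          / ((1 - k) * (qpoch (-k*q) p n * qpoch p p n))
          * (-1) ^ n * k ^ n * q ^ (2*n^2 - n)" for n
  proof -
    have d: "dn p k (-k/q) 0 n = qpoch (-k*q) p n"
      unfolding dn_def qpoch_def Ui by simp
    have p1: "(\<Prod>i<n. (-k/q) - k*p^i) = (-k/q)^n * qpoch (-q) p n"
      unfolding qpoch_def by (rule prod_factor) (use q0 in \<open>simp add: field_simps\<close>)
    have c: "(\<Prod>i<n. 0 - p^i) = (\<Prod>i<n. -(p^i))" by simp
    have "nm p k (-k/q) 0 n * gg p n = (\<Prod>i<n. (-k/q) - k*p^i) * ((\<Prod>i<n. -(p^i)) * gg p n)"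
      unfolding nm_split c by (simp only: ac_simps)
    also have "\<dots> = qpoch (-q) p n * ((-k/q)^n * q^(2*n^2))" unfolding p1 G0 by (simp add: p_def power_mult)
    also have "\<dots> = qpoch (-q) p n * ((-1)^n * k^n * q^(2*n^2 - n))"
      unfolding pw_aux[OF q0 le_2sq] power_minus[of k n] ..
    finally have ng: "nm p k (-k/q) 0 n * gg p n = qpoch (-q) p n * ((-1)^n * k^n * q^(2*n^2 - n))" .
    have p4: "p^(2*n) = q^(4*n)" by (simp add: p_def power_mult[symmetric])
    show ?thesis unfolding tt_alt[OF hk] ng d p4 by (simp add: mult_ac)
  qed
  have R: "qpoch_inf (k*p) p * qpoch_inf ((-k/q)*0*p) p / (qpoch_inf ((-k/q)*p) p * qpoch_inf (k*0*p) p)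
     = qpoch_inf (k*q^2) (q^2) / qpoch_inf (-k*q) (q^2)"
    unfolding Up by (simp add: qpoch_inf_0 p_def)
  show ?thesis using m unfolding e R by (simp add: p_def)
qed


lemma G5: fixes q :: complex assumes q0: "q \<noteq> 0"
  shows "(\<Prod>i<n. -1/q - (q^2)^i) * gg (q^2) n = qpoch (-q) (q^2) n * q^(n^2)"
proof (induction n)
  case 0 thus ?case by (simp add: gg_def qpoch_def)
next
  case (Suc n)
  define y where "y = (q^2)^n"
  have f: "(-1/q - y) * (-(q^2*y)) = (1 - (-q)*y) * (q*y)" using q0 by (simp add: field_simps power2_eq_square)
  have "(\<Prod>i<Suc n. -1/q - (q^2)^i) * gg (q^2) (Suc n) = ((\<Prod>i<n. -1/q - (q^2)^i) * gg (q^2) n) * ((-1/q - y) * (-(q^2*y)))"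
  proof -
    have a: "(\<Prod>i<Suc n. -1/q - (q^2)^i) = (\<Prod>i<n. -1/q - (q^2)^i) * (-1/q - y)"
      unfolding prod.lessThan_Suc y_def ..
    have b: "gg (q^2) (Suc n) = gg (q^2) n * (-((q^2)^n * (q^2)^1))"
      unfolding gg_def prod.lessThan_Suc power_add ..
    show ?thesis unfolding a b y_def[symmetric] power_one_right by (simp only: ac_simps)
  qed
  also have "\<dots> = qpoch (-q) (q^2) n * q^(n^2) * ((1 - (-q)*y) * (q*y))" unfolding Suc.IH f ..
  also have "\<dots> = qpoch (-q) (q^2) (Suc n) * q^((Suc n)^2)"
  proof -
    have e: "(Suc n)^2 = Suc (n^2 + 2*n)" by (simp add: power2_eq_square)
    have "q^((Suc n)^2) = q^(n^2) * (q * y)" unfolding e y_def power_Suc power_add power_mult by (simp only: ac_simps)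
    thus ?thesis by (simp add: qpoch_Suc y_def mult_ac)
  qed
  finally show ?case .
qed

lemma dn_split: "dn q a U C n = (\<Prod>i<n. 1 - U*q^(i+1)) * (\<Prod>i<n. 1 - a*C*q^(i+1))"
  by (simp add: dn_def prod.distrib)

lemma le_sq: "n \<le> n^2" for n :: nat
  by (cases n) (auto simp: power2_eq_square)

lemma odd_pow_nz: fixes q :: complex assumes "norm q < 1" shows "1 - q*(q^2)^j \<noteq> 0" "1 + q^2*(q^2)^j \<noteq> 0"
proof -
  have "norm (q^(2*j+1)) < 1" "norm (q^(2*j+2)) < 1" by (rule norm_pow_lt[OF assms], simp)+
  moreover have "q*(q^2)^j = q^(2*j+1)" "q^2*(q^2)^j = q^(2*j+2)" by (simp_all add: power_mult[symmetric] power_add[symmetric] mult_ac)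
  ultimately show "1 - q*(q^2)^j \<noteq> 0" "1 + q^2*(q^2)^j \<noteq> 0" using nz_small by metis+
qed

lemma formula6_nz: fixes q k :: complex assumes hq: "norm q < 1" and hk: "k \<noteq> 1" and q0: "q \<noteq> 0"
  shows "(\<lambda>n. (1 - k * q ^ (4*n)) * qpoch k q (2*n) / ((1 - k) * qpoch q q (2*n))
          * q ^ (2*n^2 - n))
      sums (qpoch_inf (k*q^2) (q^2) / qpoch_inf q (q^2))"
proof -
  define p where "p = q^2"
  have hp: "norm p < 1" unfolding p_def by (rule norm_q2[OF hq])
  have Up: "(1/q)*p = q" using q0 by (simp add: p_def power2_eq_square)
  have Ui: "(1/q)*p^(i+1) = q*p^i" for i
  proof -
    have "(1/q)*p^(i+1) = ((1/q)*p)*p^i" by (simp add: mult_ac)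
    thus ?thesis unfolding Up .
  qed
  have hU0: "\<forall>j. 1 - q*p^j \<noteq> 0" unfolding p_def using odd_pow_nz(1)[OF hq] by blast
  have hU: "\<forall>j. 1 - (1/q)*p^(j+1) \<noteq> 0" unfolding Ui using hU0 .
  have m: "tt p k (1/q) 0 sums (qpoch_inf (k*p) p * qpoch_inf ((1/q)*0*p) p / (qpoch_inf ((1/q)*p) p * qpoch_inf (k*0*p) p))"
    by (rule master[OF hp hU]) simp
  have e: "tt p k (1/q) 0 n = (1 - k * q ^ (4*n)) * qpoch k q (2*n) / ((1 - k) * qpoch q q (2*n))
          * q ^ (2*n^2 - n)" for n
  proof -
    have d: "dn p k (1/q) 0 n = qpoch q p n"
      unfolding dn_def qpoch_def Ui by simp
    have p1: "(\<Prod>i<n. (1/q) - k*p^i) = (1/q)^n * qpoch (k*q) p n"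
      unfolding qpoch_def by (rule prod_factor) (use q0 in \<open>simp add: field_simps\<close>)
    have c: "(\<Prod>i<n. 0 - p^i) = (\<Prod>i<n. -(p^i))" by simp
    have "nm p k (1/q) 0 n * gg p n = (\<Prod>i<n. (1/q) - k*p^i) * ((\<Prod>i<n. -(p^i)) * gg p n)"
      unfolding nm_split c by (simp only: ac_simps)
    also have "\<dots> = qpoch (k*q) p n * ((1/q)^n * q^(2*n^2))" unfolding p1 G0 by (simp add: p_def power_mult)
    also have "\<dots> = qpoch (k*q) p n * q^(2*n^2 - n)"
      unfolding pw_aux[OF q0 le_2sq] by simp
    finally have ng: "nm p k (1/q) 0 n * gg p n = qpoch (k*q) p n * q^(2*n^2 - n)" .
    have p4: "p^(2*n) = q^(4*n)" by (simp add: p_def power_mult[symmetric])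
    have d1: "qpoch k q (2*n) = qpoch k p n * qpoch (k*q) p n" unfolding p_def by (rule qpoch_double)
    have d2: "qpoch q q (2*n) = qpoch q p n * qpoch p p n" unfolding p_def qpoch_double by (simp add: power2_eq_square)
    show ?thesis unfolding tt_alt[OF hk] ng d p4 d1 d2 by (simp add: mult_ac)
  qed
  have R: "qpoch_inf (k*p) p * qpoch_inf ((1/q)*0*p) p / (qpoch_inf ((1/q)*p) p * qpoch_inf (k*0*p) p)
     = qpoch_inf (k*q^2) (q^2) / qpoch_inf q (q^2)"
    unfolding Up by (simp add: qpoch_inf_0 p_def)
  show ?thesis using m unfolding e R .
qed

lemma formula7_nz: fixes q k :: complex assumes hq: "norm q < 1" and hk: "k \<noteq> 1" and q0: "q \<noteq> 0"
  and hyp: "\<forall>n. qpoch (-k*q) (q^2) n \<noteq> 0"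
  shows "(\<lambda>n. (1 - k * q ^ (4*n)) * (qpoch (-q) (q^2) n * qpoch k q (2*n))
          / ((1 - k) * (qpoch (-k*q) (q^2) n * qpoch q q (2*n)))
          * q ^ (n^2 - n))
      sums (qpoch_inf (k*q^2) (q^2) * qpoch_inf (-1) (q^2)
            / (qpoch_inf (-k*q) (q^2) * qpoch_inf q (q^2)))"
proof -
  define p where "p = q^2"
  have hp: "norm p < 1" unfolding p_def by (rule norm_q2[OF hq])
  have Up: "(1/q)*p = q" using q0 by (simp add: p_def power2_eq_square)
  have Ui: "(1/q)*p^(i+1) = q*p^i" for i
  proof -
    have "(1/q)*p^(i+1) = ((1/q)*p)*p^i" by (simp add: mult_ac)
    thus ?thesis unfolding Up .
  qed
  have Cp: "k*(-1/q)*p = -k*q" using q0 by (simp add: p_def power2_eq_square)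
  have Ci: "k*(-1/q)*p^(i+1) = (-k*q)*p^i" for i
  proof -
    have "k*(-1/q)*p^(i+1) = (k*(-1/q)*p)*p^i" by (simp add: mult_ac)
    thus ?thesis unfolding Cp .
  qed
  have UCp: "(1/q)*(-1/q)*p = -1" using q0 by (simp add: p_def power2_eq_square)
  have hU0: "\<forall>j. 1 - q*p^j \<noteq> 0" unfolding p_def using odd_pow_nz(1)[OF hq] by blast
  have hU: "\<forall>j. 1 - (1/q)*p^(j+1) \<noteq> 0" unfolding Ui using hU0 .
  have hC: "\<forall>j. 1 - k*(-1/q)*p^(j+1) \<noteq> 0" unfolding Ci using hyp_pt[OF hyp[folded p_def]] by blast
  have m: "tt p k (1/q) (-1/q) sums (qpoch_inf (k*p) p * qpoch_inf ((1/q)*(-1/q)*p) p / (qpoch_inf ((1/q)*p) p * qpoch_inf (k*(-1/q)*p) p))"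
    by (rule master[OF hp hU hC])
  have e: "tt p k (1/q) (-1/q) n = (1 - k * q ^ (4*n)) * (qpoch (-q) p n * qpoch k q (2*n))
          / ((1 - k) * (qpoch (-k*q) p n * qpoch q q (2*n)))
          * q ^ (n^2 - n)" for n
  proof -
    have d: "dn p k (1/q) (-1/q) n = qpoch q p n * qpoch (-k*q) p n"
      unfolding dn_split qpoch_def Ui Ci by simp
    have p1: "(\<Prod>i<n. (1/q) - k*p^i) = (1/q)^n * qpoch (k*q) p n"
      unfolding qpoch_def by (rule prod_factor) (use q0 in \<open>simp add: field_simps\<close>)
    have "nm p k (1/q) (-1/q) n * gg p n = (\<Prod>i<n. (1/q) - k*p^i) * ((\<Prod>i<n. -1/q - p^i) * gg p n)"
      unfolding nm_split by (simp only: ac_simps)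
    also have "\<dots> = qpoch (k*q) p n * qpoch (-q) p n * ((1/q)^n * q^(n^2))" unfolding p1 unfolding p_def G5[OF q0] by (simp only: ac_simps)
    also have "\<dots> = qpoch (k*q) p n * qpoch (-q) p n * q^(n^2 - n)"
      unfolding pw_aux[OF q0 le_sq] by simp
    finally have ng: "nm p k (1/q) (-1/q) n * gg p n = qpoch (k*q) p n * qpoch (-q) p n * q^(n^2 - n)" .
    have p4: "p^(2*n) = q^(4*n)" by (simp add: p_def power_mult[symmetric])
    have d1: "qpoch k q (2*n) = qpoch k p n * qpoch (k*q) p n" unfolding p_def by (rule qpoch_double)
    have d2: "qpoch q q (2*n) = qpoch q p n * qpoch p p n" unfolding p_def qpoch_double by (simp add: power2_eq_square)
    show ?thesis unfolding tt_alt[OF hk] ng d p4 d1 d2 by (simp add: mult_ac)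
  qed
  have R: "qpoch_inf (k*p) p * qpoch_inf ((1/q)*(-1/q)*p) p / (qpoch_inf ((1/q)*p) p * qpoch_inf (k*(-1/q)*p) p)
     = qpoch_inf (k*q^2) (q^2) * qpoch_inf (-1) (q^2) / (qpoch_inf (-k*q) (q^2) * qpoch_inf q (q^2))"
    unfolding Up UCp Cp by (simp add: p_def mult_ac)
  show ?thesis using m unfolding e R by (simp add: p_def)
qed


lemma formula5_nz: fixes q k :: complex assumes hq: "norm q < 1" and hk: "k \<noteq> 1" and q0: "q \<noteq> 0"
  and hyp: "\<forall>n. qpoch (-k*q) (q^2) n \<noteq> 0"
  shows "(\<lambda>n. (1 - k * q ^ (4*n)) * (qpoch (-q) (q^2) n * qpoch (k^2) (q^4) n)
          / ((1 - k) * (qpoch (-k*q) (q^2) n * qpoch (q^4) (q^4) n))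
          * (-1) ^ n * q ^ (n^2))
      sums (qpoch_inf (k*q^2) (q^2) * qpoch_inf q q
            / (qpoch_inf (-k*q) (q^2) * qpoch_inf (q^4) (q^4)))"
proof -
  define p where "p = q^2"
  have hp: "norm p < 1" unfolding p_def by (rule norm_q2[OF hq])
  have p2: "p^2 = q^4" by (simp add: p_def power_mult[symmetric])
  have Cp: "k*(-1/q)*p = -k*q" using q0 by (simp add: p_def power2_eq_square)
  have Ci: "k*(-1/q)*p^(i+1) = (-k*q)*p^i" for i
  proof -
    have "k*(-1/q)*p^(i+1) = (k*(-1/q)*p)*p^i" by (simp add: mult_ac)
    thus ?thesis unfolding Cp .
  qed
  have UCp: "(-1)*(-1/q)*p = q" using q0 by (simp add: p_def power2_eq_square)
  have hU0: "\<forall>j. 1 + p*p^j \<noteq> 0" unfolding p_def using odd_pow_nz(2)[OF hq] by blast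
  have hU: "\<forall>j. 1 - (-1)*p^(j+1) \<noteq> 0" using hU0 by simp
  have hC: "\<forall>j. 1 - k*(-1/q)*p^(j+1) \<noteq> 0" unfolding Ci using hyp_pt[OF hyp[folded p_def]] by blast
  have m: "tt p k (-1) (-1/q) sums (qpoch_inf (k*p) p * qpoch_inf ((-1)*(-1/q)*p) p / (qpoch_inf ((-1)*p) p * qpoch_inf (k*(-1/q)*p) p))"
    by (rule master[OF hp hU hC])
  have e: "tt p k (-1) (-1/q) n = (1 - k * q ^ (4*n)) * (qpoch (-q) p n * qpoch (k^2) (q^4) n)
          / ((1 - k) * (qpoch (-k*q) p n * qpoch (q^4) (q^4) n))
          * (-1) ^ n * q ^ (n^2)" for n
  proof -
    have d: "dn p k (-1) (-1/q) n = qpoch (-p) p n * qpoch (-k*q) p n"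
      unfolding dn_split qpoch_def Ci by simp
    have p1: "(\<Prod>i<n. -1 - k*p^i) = (-1)^n * qpoch (-k) p n"
      unfolding qpoch_def by (rule prod_factor) (simp add: algebra_simps)
    have "nm p k (-1) (-1/q) n * gg p n = (\<Prod>i<n. -1 - k*p^i) * ((\<Prod>i<n. -1/q - p^i) * gg p n)"
      unfolding nm_split by (simp only: ac_simps)
    also have "\<dots> = qpoch (-k) p n * qpoch (-q) p n * ((-1)^n * q^(n^2))" unfolding p1 unfolding p_def G5[OF q0] by (simp only: ac_simps)
    finally have ng: "nm p k (-1) (-1/q) n * gg p n = qpoch (-k) p n * qpoch (-q) p n * ((-1)^n * q^(n^2))" .
    have p4: "p^(2*n) = q^(4*n)" by (simp add: p_def power_mult[symmetric])
    have a1: "qpoch (k^2) (q^4) n = qpoch k p n * qpoch (-k) p n" unfolding qpoch_pm p2 ..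
    have a2: "qpoch (q^4) (q^4) n = qpoch p p n * qpoch (-p) p n" unfolding qpoch_pm p2 ..
    show ?thesis unfolding tt_alt[OF hk] ng d p4 a1 a2 by (simp add: mult_ac)
  qed
  have R: "qpoch_inf (k*p) p * qpoch_inf ((-1)*(-1/q)*p) p / (qpoch_inf ((-1)*p) p * qpoch_inf (k*(-1/q)*p) p)
     = qpoch_inf (k*q^2) (q^2) * qpoch_inf q q / (qpoch_inf (-k*q) (q^2) * qpoch_inf (q^4) (q^4))"
  proof -
    have s: "qpoch_inf q p * qpoch_inf p p = qpoch_inf q q"
      using qinf_sq[OF hq, of q] by (simp add: p_def power2_eq_square)
    have pm: "qpoch_inf p p * qpoch_inf (-p) p = qpoch_inf (q^4) (q^4)"
      using qinf_pm[OF hp, of p] unfolding p2 .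
    have I: "qpoch_inf q p * qpoch_inf (q^4) (q^4) = qpoch_inf q q * qpoch_inf (-p) p"
      unfolding pm[symmetric] s[symmetric] by (simp only: ac_simps)
    have nB: "qpoch_inf (-p) p \<noteq> 0" by (rule qpoch_inf_nz[OF hp]) (use hU0 in simp)
    have nC: "qpoch_inf (-k*q) p \<noteq> 0" by (rule qpoch_inf_nz[OF hp]) (use hyp_pt[OF hyp[folded p_def]] in blast)
    have nP: "qpoch_inf p p \<noteq> 0"
    proof (rule qpoch_inf_nz[OF hp])
      fix i show "1 - p*p^i \<noteq> 0" using nz_small(1)[OF norm_pow_lt[OF hp, of "Suc i"]] by simp
    qed
    have nE: "qpoch_inf (q^4) (q^4) \<noteq> 0" unfolding pm[symmetric] using nP nB by simp
    have "qpoch_inf (k*p) p * qpoch_inf q p / (qpoch_inf (-p) p * qpoch_inf (-k*q) p)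
        = qpoch_inf (k*p) p * qpoch_inf q q / (qpoch_inf (-k*q) p * qpoch_inf (q^4) (q^4))"
      using nB nC nE I by (simp add: frac_eq_eq)
    thus ?thesis unfolding UCp Cp by (simp add: p_def)
  qed
  show ?thesis using m unfolding e R by (simp add: p_def)
qed


lemma qpoch_z: "qpoch x 0 n = (if n = 0 then 1 else 1 - x)"
proof (cases n)
  case 0 thus ?thesis by (simp add: qpoch_def)
next
  case (Suc m) thus ?thesis unfolding qpoch_def Suc prod.lessThan_Suc_shift by simp
qed

lemma qinf_z: "qpoch_inf x 0 = 1 - x"
proof -
  have "(\<lambda>n. qpoch x 0 n) \<longlonglongrightarrow> 1 - x"
  proof (rule LIMSEQ_offset[where k=1])
    show "(\<lambda>n. qpoch x 0 (n + 1)) \<longlonglongrightarrow> 1 - x" by (simp add: qpoch_z)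
  qed
  thus ?thesis unfolding qpoch_inf_def by (rule limI)
qed

lemma sum0: assumes "\<And>n. n \<noteq> 0 \<Longrightarrow> f n = 0" shows "f sums f 0"
  using sums_finite[of "{0}" f] assms by simp

lemma sum01: assumes "\<And>n. n \<noteq> 0 \<Longrightarrow> n \<noteq> 1 \<Longrightarrow> f n = 0" shows "f sums (f 0 + f 1)"
  using sums_finite[of "{0,1}" f] assms by simp

lemma pos_e1: "n \<noteq> 0 \<Longrightarrow> 2*n^2 - n \<noteq> (0::nat)" by (cases n) (auto simp: power2_eq_square)
lemma pos_e2: "n \<noteq> 0 \<Longrightarrow> n \<noteq> 1 \<Longrightarrow> n^2 - n \<noteq> (0::nat)" by (cases n) (auto simp: power2_eq_square)
lemma pos_e3: "n \<noteq> 0 \<Longrightarrow> n^2 \<noteq> (0::nat)" by simp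
lemma lt1: "n \<noteq> 0 \<Longrightarrow> n < 2*n^2" for n :: nat by (cases n) (auto simp: power2_eq_square)
lemma lt2: "n \<noteq> 0 \<Longrightarrow> n \<noteq> 1 \<Longrightarrow> n < n^2" for n :: nat
  by (cases n) (auto simp: power2_eq_square)

lemma formula2_z: fixes q k :: complex assumes q0: "q = 0" and hk: "k \<noteq> 1"
  shows "(\<lambda>n. (1 - k * q ^ (4*n)) * (qpoch (-q) (q^2) n * qpoch k (q^2) n)
          / ((1 - k) * (qpoch (-k*q) (q^2) n * qpoch (q^2) (q^2) n))
          * (-1) ^ n * k ^ n * q ^ (2*n^2 - n))
      sums (qpoch_inf (k*q^2) (q^2) / qpoch_inf (-k*q) (q^2))"
proof -
  have "(\<lambda>n. (1 - k * q ^ (4*n)) * (qpoch (-q) (q^2) n * qpoch k (q^2) n)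
          / ((1 - k) * (qpoch (-k*q) (q^2) n * qpoch (q^2) (q^2) n))
          * (-1) ^ n * k ^ n * q ^ (2*n^2 - n)) sums ((1 - k * q ^ (4*0)) * (qpoch (-q) (q^2) 0 * qpoch k (q^2) 0)
          / ((1 - k) * (qpoch (-k*q) (q^2) 0 * qpoch (q^2) (q^2) 0))
          * (-1) ^ 0 * k ^ 0 * q ^ (2*0^2 - 0))"
    by (rule sum0) (simp add: q0 pos_e1 lt1)
  thus ?thesis using hk by (simp add: q0 qpoch_def qpoch_inf_0)
qed

lemma formula6_z: fixes q k :: complex assumes q0: "q = 0" and hk: "k \<noteq> 1"
  shows "(\<lambda>n. (1 - k * q ^ (4*n)) * qpoch k q (2*n) / ((1 - k) * qpoch q q (2*n))
          * q ^ (2*n^2 - n))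
      sums (qpoch_inf (k*q^2) (q^2) / qpoch_inf q (q^2))"
proof -
  have "(\<lambda>n. (1 - k * q ^ (4*n)) * qpoch k q (2*n) / ((1 - k) * qpoch q q (2*n))
          * q ^ (2*n^2 - n)) sums ((1 - k * q ^ (4*0)) * qpoch k q (2*0) / ((1 - k) * qpoch q q (2*0))
          * q ^ (2*0^2 - 0))"
    by (rule sum0) (simp add: q0 pos_e1 lt1)
  thus ?thesis using hk by (simp add: q0 qpoch_def qpoch_inf_0)
qed

lemma formula5_z: fixes q k :: complex assumes q0: "q = 0" and hk: "k \<noteq> 1"
  shows "(\<lambda>n. (1 - k * q ^ (4*n)) * (qpoch (-q) (q^2) n * qpoch (k^2) (q^4) n)
          / ((1 - k) * (qpoch (-k*q) (q^2) n * qpoch (q^4) (q^4) n))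
          * (-1) ^ n * q ^ (n^2))
      sums (qpoch_inf (k*q^2) (q^2) * qpoch_inf q q
            / (qpoch_inf (-k*q) (q^2) * qpoch_inf (q^4) (q^4)))"
proof -
  have "(\<lambda>n. (1 - k * q ^ (4*n)) * (qpoch (-q) (q^2) n * qpoch (k^2) (q^4) n)
          / ((1 - k) * (qpoch (-k*q) (q^2) n * qpoch (q^4) (q^4) n))
          * (-1) ^ n * q ^ (n^2)) sums ((1 - k * q ^ (4*0)) * (qpoch (-q) (q^2) 0 * qpoch (k^2) (q^4) 0)
          / ((1 - k) * (qpoch (-k*q) (q^2) 0 * qpoch (q^4) (q^4) 0))
          * (-1) ^ 0 * q ^ (0^2))"
    by (rule sum0) (simp add: q0)
  thus ?thesis using hk by (simp add: q0 qpoch_def qpoch_inf_0)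
qed

lemma formula7_z: fixes q k :: complex assumes q0: "q = 0" and hk: "k \<noteq> 1"
  shows "(\<lambda>n. (1 - k * q ^ (4*n)) * (qpoch (-q) (q^2) n * qpoch k q (2*n))
          / ((1 - k) * (qpoch (-k*q) (q^2) n * qpoch q q (2*n)))
          * q ^ (n^2 - n))
      sums (qpoch_inf (k*q^2) (q^2) * qpoch_inf (-1) (q^2)
            / (qpoch_inf (-k*q) (q^2) * qpoch_inf q (q^2)))"
proof -
  let ?f = "\<lambda>n. (1 - k * q ^ (4*n)) * (qpoch (-q) (q^2) n * qpoch k q (2*n))
          / ((1 - k) * (qpoch (-k*q) (q^2) n * qpoch q q (2*n)))
          * q ^ (n^2 - n)"
  have "?f sums (?f 0 + ?f 1)"
    by (rule sum01) (simp add: q0 pos_e2 lt2)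
  moreover have "?f 0 = 1" using hk by (simp add: q0 qpoch_def)
  moreover have "?f 1 = 1" using hk by (simp add: q0 qpoch_def numeral_2_eq_2)
  moreover have "qpoch_inf (k*q^2) (q^2) * qpoch_inf (-1) (q^2)
            / (qpoch_inf (-k*q) (q^2) * qpoch_inf q (q^2)) = 2"
    by (simp add: q0 qinf_z)
  ultimately show ?thesis by simp
qed

lemma formula2: fixes q k :: complex assumes hq: "norm q < 1" and hk: "k \<noteq> 1"
  and hyp: "\<forall>n. qpoch (-k*q) (q^2) n \<noteq> 0"
  shows "(\<lambda>n. (1 - k * q ^ (4*n)) * (qpoch (-q) (q^2) n * qpoch k (q^2) n)
          / ((1 - k) * (qpoch (-k*q) (q^2) n * qpoch (q^2) (q^2) n))
          * (-1) ^ n * k ^ n * q ^ (2*n^2 - n))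
      sums (qpoch_inf (k*q^2) (q^2) / qpoch_inf (-k*q) (q^2))"
  using formula2_z[OF _ hk] formula2_nz[OF hq hk _ hyp] by (cases "q = 0") auto

lemma formula5: fixes q k :: complex assumes hq: "norm q < 1" and hk: "k \<noteq> 1"
  and hyp: "\<forall>n. qpoch (-k*q) (q^2) n \<noteq> 0"
  shows "(\<lambda>n. (1 - k * q ^ (4*n)) * (qpoch (-q) (q^2) n * qpoch (k^2) (q^4) n)
          / ((1 - k) * (qpoch (-k*q) (q^2) n * qpoch (q^4) (q^4) n))
          * (-1) ^ n * q ^ (n^2))
      sums (qpoch_inf (k*q^2) (q^2) * qpoch_inf q q
            / (qpoch_inf (-k*q) (q^2) * qpoch_inf (q^4) (q^4)))"
  using formula5_z[OF _ hk] formula5_nz[OF hq hk _ hyp] by (cases "q = 0") auto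

lemma formula6: fixes q k :: complex assumes hq: "norm q < 1" and hk: "k \<noteq> 1"
  shows "(\<lambda>n. (1 - k * q ^ (4*n)) * qpoch k q (2*n) / ((1 - k) * qpoch q q (2*n))
          * q ^ (2*n^2 - n))
      sums (qpoch_inf (k*q^2) (q^2) / qpoch_inf q (q^2))"
  using formula6_z[OF _ hk] formula6_nz[OF hq hk] by (cases "q = 0") auto

lemma formula7: fixes q k :: complex assumes hq: "norm q < 1" and hk: "k \<noteq> 1"
  and hyp: "\<forall>n. qpoch (-k*q) (q^2) n \<noteq> 0"
  shows "(\<lambda>n. (1 - k * q ^ (4*n)) * (qpoch (-q) (q^2) n * qpoch k q (2*n))
          / ((1 - k) * (qpoch (-k*q) (q^2) n * qpoch q q (2*n)))
          * q ^ (n^2 - n))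
      sums (qpoch_inf (k*q^2) (q^2) * qpoch_inf (-1) (q^2)
            / (qpoch_inf (-k*q) (q^2) * qpoch_inf q (q^2)))"
  using formula7_z[OF _ hk] formula7_nz[OF hq hk _ hyp] by (cases "q = 0") auto

theorem mainTheorem16:
  fixes q k :: complex
  assumes hq: "norm q < 1" and hk: "k \<noteq> 1"
  shows
   "((\<lambda>n. (1 - k * q ^ (2*n)) * qpoch k q n / ((1 - k) * qpoch q q n)
          * (-1) ^ n * k ^ n * q ^ (n * (3*n - 1) div 2))
      sums qpoch_inf (k*q) q) \<and>
   ((\<forall>n. qpoch (-k*q) (q^2) n \<noteq> 0) \<longrightarrow>
    (\<lambda>n. (1 - k * q ^ (4*n)) * (qpoch (-q) (q^2) n * qpoch k (q^2) n)
          / ((1 - k) * (qpoch (-k*q) (q^2) n * qpoch (q^2) (q^2) n))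
          * (-1) ^ n * k ^ n * q ^ (2*n^2 - n))
      sums (qpoch_inf (k*q^2) (q^2) / qpoch_inf (-k*q) (q^2))) \<and>
   ((\<forall>n. qpoch (-k*q) q n \<noteq> 0) \<longrightarrow>
    (\<lambda>n. (1 - k * q ^ (2*n)) * (qpoch (-1) q n * qpoch k q n)
          / ((1 - k) * (qpoch (-k*q) q n * qpoch q q n))
          * (-1) ^ n * k ^ n * q ^ (n^2))
      sums (qpoch_inf (k*q) q / qpoch_inf (-k*q) q)) \<and>
   ((\<lambda>n. (1 - k * q ^ (2*n)) * qpoch (k^2) (q^2) n / ((1 - k) * qpoch (q^2) (q^2) n)
          * (-1) ^ n * q ^ (n^2))
      sums (qpoch_inf (k*q) q * qpoch_inf q (q^2))) \<and>
   ((\<forall>n. qpoch (-k*q) (q^2) n \<noteq> 0) \<longrightarrow>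
    (\<lambda>n. (1 - k * q ^ (4*n)) * (qpoch (-q) (q^2) n * qpoch (k^2) (q^4) n)
          / ((1 - k) * (qpoch (-k*q) (q^2) n * qpoch (q^4) (q^4) n))
          * (-1) ^ n * q ^ (n^2))
      sums (qpoch_inf (k*q^2) (q^2) * qpoch_inf q q
            / (qpoch_inf (-k*q) (q^2) * qpoch_inf (q^4) (q^4)))) \<and>
   ((\<lambda>n. (1 - k * q ^ (4*n)) * qpoch k q (2*n) / ((1 - k) * qpoch q q (2*n))
          * q ^ (2*n^2 - n))
      sums (qpoch_inf (k*q^2) (q^2) / qpoch_inf q (q^2))) \<and>
   ((\<forall>n. qpoch (-k*q) (q^2) n \<noteq> 0) \<longrightarrow>
    (\<lambda>n. (1 - k * q ^ (4*n)) * (qpoch (-q) (q^2) n * qpoch k q (2*n))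
          / ((1 - k) * (qpoch (-k*q) (q^2) n * qpoch q q (2*n)))
          * q ^ (n^2 - n))
      sums (qpoch_inf (k*q^2) (q^2) * qpoch_inf (-1) (q^2)
            / (qpoch_inf (-k*q) (q^2) * qpoch_inf q (q^2))))"
    using formula1[OF hq hk] formula2[OF hq hk] formula3[OF hq hk] formula4[OF hq hk]
    formula5[OF hq hk] formula6[OF hq hk] formula7[OF hq hk] by blast

end
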